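(* Let $\epsilon > 0$, $M \geq 1$, and let $I,J \subset \mathbb{R}$ be intervals with $|I| > 2M^{2}\sqrt{|J|} + 4M\epsilon$. If $F \colon Q := I \times J \to \mathbb{W}$ is a horizontal $(M,\epsilon)$-quasi-isometric embedding, then the induced map $f \colon (J,\|\cdot\|) \to (\mathbb{R},\|\cdot\|)$, $f(t) := \pi_{2}(F(y,t))$ (for any $y \in I$), is an $(M,2\epsilon)$-quasi-isometric embedding.
   Context: $\mathbb{W}$ is $\mathbb{R}^{2}$ with the metric $d_{\mathrm{par}}((y,t),(\xi,\tau)) = \max\{|y-\xi|,|t-\tau|^{1/2}\}$; $\pi_{1}(y,t) = y$, $\pi_{2}(y,t) = t$; horizontal lines in $\mathbb{W}$ are the sets $\mathbb{R} \times \{t\}$. $\|x-y\| := \sqrt{|x-y|}$ denotes the square root metric on $\mathbb{R}$. A map $F \colon (X,d) \to (Y,d')$ is an $(M,\epsilon)$-quasi-isometric embedding if $M^{-1}d(x,y) - \epsilon \leq d'(F(x),F(y)) \leq Md(x,y) + \epsilon$ for all $x,y$. For a rectangle $Q = I \times J$, a map $F \colon Q \to \mathbb{W}$ is a horizontal $(M,\epsilon)$-quasi-isometric embedding if it is an $(M,\epsilon)$-quasi-isometric embedding with respect to $d_{\mathrm{par}}$ and for every $t \in J$ there is a horizontal line $\ell_{t} \subset \mathbb{W}$ with $F(I \times \{t\}) \subset \ell_{t}$ (so $f$ is well defined). *)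

theory Defs
  imports "HOL-Analysis.Analysis"
begin

text \<open>The parabolic plane W = R^2 with the parabolic metric.\<close>
definition d_par :: "real \<times> real \<Rightarrow> real \<times> real \<Rightarrow> real" where
  "d_par p q = max \<bar>fst p - fst q\<bar> (sqrt \<bar>snd p - snd q\<bar>)"

definition d_sqrt :: "real \<Rightarrow> real \<Rightarrow> real" where
  "d_sqrt x y = sqrt \<bar>x - y\<bar>"

definition qi_embedding ::
  "real \<Rightarrow> real \<Rightarrow> 'a set \<Rightarrow> ('a \<Rightarrow> 'a \<Rightarrow> real) \<Rightarrow> ('b \<Rightarrow> 'b \<Rightarrow> real) \<Rightarrow> ('a \<Rightarrow> 'b) \<Rightarrow> bool" where
  "qi_embedding M eps A d d' F \<longleftrightarrow>
     (\<forall>x\<in>A. \<forall>y\<in>A. d x y / M - eps \<le> d' (F x) (F y) \<and> d' (F x) (F y) \<le> M * d x y + eps)"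

definition horizontal_qi_embedding ::
  "real \<Rightarrow> real \<Rightarrow> real set \<Rightarrow> real set \<Rightarrow> (real \<times> real \<Rightarrow> real \<times> real) \<Rightarrow> bool" where
  "horizontal_qi_embedding M eps I J F \<longleftrightarrow>
     qi_embedding M eps (I \<times> J) d_par d_par F \<and>
     (\<forall>t\<in>J. \<exists>s. F ` (I \<times> {t}) \<subseteq> UNIV \<times> {s})"

definition ivl_len :: "real set \<Rightarrow> ereal" where
  "ivl_len S = Sup (ereal ` S) - Inf (ereal ` S)"

definition esqrt :: "ereal \<Rightarrow> ereal" where
  "esqrt x = (case x of ereal r \<Rightarrow> ereal (sqrt r) | PInfty \<Rightarrow> \<infinity> | MInfty \<Rightarrow> 0)"

end

theory Submission
  imports Defs
begin

lemma disc_ivt: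
  fixes p :: "nat \<Rightarrow> real"
  shows "c \<ge> 0 \<Longrightarrow> (\<forall>k<n. \<bar>p (Suc k) - p k\<bar> \<le> c) \<Longrightarrow> p 0 \<le> x \<Longrightarrow> x \<le> p n \<Longrightarrow> \<exists>k\<le>n. \<bar>p k - x\<bar> \<le> c/2"
proof (induction n)
  case 0
  then show ?case by auto
next
  case (Suc n)
  show ?case
  proof (cases "x \<le> p n")
    case True
    then obtain k where "k \<le> n" "\<bar>p k - x\<bar> \<le> c/2" using Suc by auto
    then show ?thesis by (intro exI[of _ k]) auto
  next
    case False
    have "\<bar>p (Suc n) - p n\<bar> \<le> c" using Suc.prems by auto
    then have "\<bar>p (Suc n) - x\<bar> \<le> c/2 \<or> \<bar>p n - x\<bar> \<le> c/2" using False Suc.prems by auto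
    then show ?thesis by (metis le_Suc_eq order_refl)
  qed
qed

lemma civt0:
  fixes g :: "real \<Rightarrow> real"
  assumes "a \<le> b" "\<forall>u\<in>{a..b}. \<forall>v\<in>{a..b}. \<bar>g u - g v\<bar> \<le> M*\<bar>u-v\<bar> + e" "M > 0" "e > 0"
    "g a \<le> x" "x \<le> g b"
  shows "\<exists>v\<in>{a..b}. \<bar>g v - x\<bar> \<le> e"
proof -
  define N :: nat where "N = nat (ceiling ((b-a)*M/e)) + 1"
  have Npos: "real N > 0" unfolding N_def by simp
  have NM: "(b-a)*M/e \<le> real N" unfolding N_def by linarith
  define h where "h = (b-a)/N"
  have h0: "h \<ge> 0" unfolding h_def using assms(1) Npos by simp
  have Mh: "M*h \<le> e"
  proof -
    have "(b-a)*M \<le> real N * e" using NM assms(4) by (simp add: field_simps)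
    then show ?thesis unfolding h_def using Npos by (simp add: field_simps)
  qed
  define p where "p k = g (a + real k * h)" for k
  have inab: "a + real k * h \<in> {a..b}" if "k \<le> N" for k
  proof -
    have "real k * h \<le> real N * h" using that h0 by (simp add: mult_right_mono)
    also have "real N * h = b - a" unfolding h_def using Npos by simp
    finally show ?thesis using h0 by simp
  qed
  have pN: "p N = g b" unfolding p_def h_def using Npos by simp
  have steps: "\<forall>k<N. \<bar>p (Suc k) - p k\<bar> \<le> 2*e"
  proof (intro allI impI)
    fix k assume k: "k < N"
    have i1: "a + real (Suc k) * h \<in> {a..b}" "a + real k * h \<in> {a..b}" using inab[of k] inab[of "Suc k"] k by auto
    have "\<bar>p (Suc k) - p k\<bar> \<le> M * \<bar>(a + real (Suc k) * h) - (a + real k * h)\<bar> + e"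
      unfolding p_def using assms(2) i1 by blast
    also have "\<dots> = M*h + e" using h0 by (simp add: algebra_simps)
    finally show "\<bar>p (Suc k) - p k\<bar> \<le> 2*e" using Mh by simp
  qed
  obtain k where "k \<le> N" "\<bar>p k - x\<bar> \<le> 2*e/2"
    using disc_ivt[of "2*e" N p x] assms(4) steps assms(5,6) pN unfolding p_def by auto
  then show ?thesis using inab[of k] unfolding p_def by auto
qed

lemma civt:
  fixes g :: "real \<Rightarrow> real"
  assumes "a \<le> b" "\<forall>u\<in>{a..b}. \<forall>v\<in>{a..b}. \<bar>g u - g v\<bar> \<le> M*\<bar>u-v\<bar> + e" "M > 0" "e > 0"
    "min (g a) (g b) \<le> x" "x \<le> max (g a) (g b)"
  shows "\<exists>v\<in>{a..b}. \<bar>g v - x\<bar> \<le> e"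
proof (cases "g a \<le> g b")
  case True
  then show ?thesis using civt0[OF assms(1-4)] assms(5,6) by auto
next
  case False
  have "\<forall>u\<in>{a..b}. \<forall>v\<in>{a..b}. \<bar>(-g u) - (- g v)\<bar> \<le> M*\<bar>u-v\<bar> + e"
  proof (intro ballI)
    fix u v assume "u \<in> {a..b}" "v \<in> {a..b}"
    then have "\<bar>g u - g v\<bar> \<le> M*\<bar>u-v\<bar> + e" using assms(2) by blast
    then show "\<bar>(-g u) - (- g v)\<bar> \<le> M*\<bar>u-v\<bar> + e" by (simp add: abs_minus_commute)
  qed
  from civt0[OF assms(1) this assms(3,4), of "-x"] False assms(5,6)
  obtain v where "v\<in>{a..b}" "\<bar>- g v - - x\<bar> \<le> e" by auto
  then show ?thesis by (intro bexI[of _ v]) auto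
qed

lemma overlap:
  fixes A B A' B' K :: real
  assumes "\<bar>A - A'\<bar> \<le> K" "\<bar>B - B'\<bar> \<le> K" "\<bar>B - A\<bar> \<ge> 2*K"
  shows "(min A B \<le> A' \<and> A' \<le> max A B) \<or> (min A' B' \<le> A \<and> A \<le> max A' B')"
proof (cases "A \<le> B")
  case True
  then have "B - A \<ge> 2*K" using assms(3) by simp
  then show ?thesis using True assms(1,2) unfolding abs_le_iff min_def max_def by (cases "A \<le> A'") auto
next
  case False
  then have "A - B \<ge> 2*K" using assms(3) by simp
  then show ?thesis using False assms(1,2) unfolding abs_le_iff min_def max_def by (cases "A \<le> A'") auto
qed

lemma ivl_len_ge:
  fixes J :: "real set"
  assumes "t \<in> J" "s \<in> J"
  shows "ereal \<bar>t - s\<bar> \<le> ivl_len J"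
proof -
  have "ereal (max t s) \<le> Sup (ereal ` J)" using assms by (auto intro: Sup_upper simp: max_def)
  moreover have "Inf (ereal ` J) \<le> ereal (min t s)" using assms by (auto intro: Inf_lower simp: min_def)
  ultimately have "ereal (max t s) - ereal (min t s) \<le> Sup (ereal ` J) - Inf (ereal ` J)"
    by (intro ereal_minus_mono) auto
  moreover have "ereal \<bar>t - s\<bar> = ereal (max t s) - ereal (min t s)" by (simp add: abs_if max_def min_def)
  ultimately show ?thesis unfolding ivl_len_def by simp
qed

lemma ivl_len_gt:
  fixes I :: "real set"
  assumes "I \<noteq> {}" "ivl_len I > ereal r"
  shows "\<exists>a\<in>I. \<exists>b\<in>I. b - a > r"
proof (rule ccontr)
  assume "\<not> ?thesis"
  then have H: "\<And>a b. a \<in> I \<Longrightarrow> b \<in> I \<Longrightarrow> b \<le> a + r" by force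
  obtain a0 where a0: "a0 \<in> I" using assms(1) by auto
  have S1: "Sup (ereal ` I) \<le> ereal (a + r)" if "a \<in> I" for a
    using H that by (auto intro!: Sup_least)
  have S2: "ereal a0 \<le> Sup (ereal ` I)" using a0 by (auto intro: Sup_upper)
  obtain S where S: "Sup (ereal ` I) = ereal S"
    using S1[OF a0] S2 by (cases "Sup (ereal ` I)") auto
  have "S \<le> a + r" if "a \<in> I" for a using S1[OF that] S by simp
  then have "\<forall>a\<in>I. ereal (S - r) \<le> ereal a" by force
  then have "ereal (S - r) \<le> Inf (ereal ` I)" by (auto intro!: Inf_greatest)
  then have "Sup (ereal ` I) - Inf (ereal ` I) \<le> ereal S - ereal (S - r)"
    using S by (intro ereal_minus_mono) auto
  then show False using assms(2) unfolding ivl_len_def by simp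
qed

lemma esqrt_mono_ereal:
  assumes "ereal x \<le> y" "x \<ge> 0"
  shows "ereal (sqrt x) \<le> esqrt y"
  using assms by (cases y) (auto simp: esqrt_def)

theorem lemma3p13:
  fixes M \<epsilon> :: real and I J :: "real set" and F :: "real \<times> real \<Rightarrow> real \<times> real"
  assumes "\<epsilon> > 0" and "M \<ge> 1"
    and "is_interval I" and "is_interval J"
    and "ivl_len I > ereal (2 * M\<^sup>2) * esqrt (ivl_len J) + ereal (4 * M * \<epsilon>)"
    and "horizontal_qi_embedding M \<epsilon> I J F"
  shows "\<forall>y\<in>I. qi_embedding M (2 * \<epsilon>) J d_sqrt d_sqrt (\<lambda>t. snd (F (y, t)))"
proof
  fix y assume y: "y \<in> I"
  have qi: "\<And>p q. p \<in> I \<times> J \<Longrightarrow> q \<in> I \<times> J \<Longrightarrow>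
      d_par p q / M - \<epsilon> \<le> d_par (F p) (F q) \<and> d_par (F p) (F q) \<le> M * d_par p q + \<epsilon>"
    using assms(6) unfolding horizontal_qi_embedding_def qi_embedding_def by blast
  have hor: "snd (F (u, t)) = snd (F (v, t))" if "u \<in> I" "v \<in> I" "t \<in> J" for u v t
  proof -
    note th = that
    obtain s where "F ` (I \<times> {t}) \<subseteq> UNIV \<times> {s}" using assms(6) th(3)
      unfolding horizontal_qi_embedding_def by blast
    then have "F (u,t) \<in> UNIV \<times> {s}" "F (v,t) \<in> UNIV \<times> {s}" using th by auto
    then show ?thesis by (auto simp: mem_Times_iff)
  qed
  have M0: "M > 0" using assms(2) by simp
  show "qi_embedding M (2 * \<epsilon>) J d_sqrt d_sqrt (\<lambda>t. snd (F (y, t)))"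
    unfolding qi_embedding_def
  proof (intro ballI conjI)
    fix t s assume t: "t \<in> J" and s: "s \<in> J"
    have "d_sqrt (snd (F (y, t))) (snd (F (y, s))) \<le> d_par (F (y,t)) (F (y,s))"
      unfolding d_sqrt_def d_par_def by simp
    also have "\<dots> \<le> M * d_par (y,t) (y,s) + \<epsilon>" using qi[of "(y,t)" "(y,s)"] y t s by auto
    also have "d_par (y,t) (y,s) = d_sqrt t s" unfolding d_par_def d_sqrt_def by simp
    finally show "d_sqrt (snd (F (y, t))) (snd (F (y, s))) \<le> M * d_sqrt t s + 2 * \<epsilon>"
      using assms(1) by simp
    define K where "K = M * sqrt \<bar>t - s\<bar> + \<epsilon>"
    define gt where "gt u = fst (F (u, t))" for u
    define gs where "gs u = fst (F (u, s))" for u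
    define ft where "ft = snd (F (y, t))"
    define fs where "fs = snd (F (y, s))"
    have cross: "\<bar>gt u - gs u\<bar> \<le> K" if "u \<in> I" for u
    proof -
      have "\<bar>gt u - gs u\<bar> \<le> d_par (F (u,t)) (F (u,s))"
        unfolding gt_def gs_def d_par_def by simp
      also have "\<dots> \<le> M * d_par (u,t) (u,s) + \<epsilon>" using qi[of "(u,t)" "(u,s)"] that t s by auto
      finally show ?thesis unfolding K_def d_par_def by simp
    qed
    have along: "\<bar>u - v\<bar> / M - \<epsilon> \<le> \<bar>g u - g v\<bar> \<and> \<bar>g u - g v\<bar> \<le> M * \<bar>u - v\<bar> + \<epsilon>"
      if "u \<in> I" "v \<in> I" "r \<in> J" "g = (\<lambda>u. fst (F (u, r)))" for u v r g
    proof -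
      have e: "d_par (F (u,r)) (F (v,r)) = \<bar>g u - g v\<bar>"
        unfolding d_par_def that(4) using hor[OF that(1,2,3)] by simp
      have "d_par (u,r) (v,r) = \<bar>u - v\<bar>" unfolding d_par_def by simp
      then show ?thesis using qi[of "(u,r)" "(v,r)"] that e by auto
    qed
    have key: "sqrt \<bar>t - s\<bar> / M - 2 * \<epsilon> \<le> sqrt \<bar>ft - fs\<bar>"
      if "u \<in> I" "v \<in> I" "\<bar>gt u - gs v\<bar> \<le> \<epsilon>" for u v
    proof -
      have "d_par (u,t) (v,s) / M - \<epsilon> \<le> d_par (F (u,t)) (F (v,s))"
        using qi[of "(u,t)" "(v,s)"] that t s by auto
      moreover have "sqrt \<bar>t - s\<bar> / M \<le> d_par (u,t) (v,s) / M"
        using M0 unfolding d_par_def by (simp add: divide_right_mono)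
      moreover have "d_par (F (u,t)) (F (v,s)) = max \<bar>gt u - gs v\<bar> (sqrt \<bar>ft - fs\<bar>)"
        unfolding d_par_def gt_def gs_def ft_def fs_def
        using hor[OF that(1) y t] hor[OF that(2) y s] by simp
      ultimately have h: "sqrt \<bar>t - s\<bar> / M - \<epsilon> \<le> max \<bar>gt u - gs v\<bar> (sqrt \<bar>ft - fs\<bar>)" by linarith
      have "sqrt \<bar>t - s\<bar> / M - \<epsilon> \<le> \<epsilon> \<or> sqrt \<bar>t - s\<bar> / M - \<epsilon> \<le> sqrt \<bar>ft - fs\<bar>"
        using h that(3) unfolding max_def by (cases "\<bar>gt u - gs v\<bar> \<le> sqrt \<bar>ft - fs\<bar>") auto
      moreover have sq0: "0 \<le> sqrt \<bar>ft - fs\<bar>" by simp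
      ultimately consider (c1) "sqrt \<bar>t - s\<bar> / M - \<epsilon> \<le> \<epsilon>" | (c2) "sqrt \<bar>t - s\<bar> / M - \<epsilon> \<le> sqrt \<bar>ft - fs\<bar>" by blast
      then show ?thesis
      proof cases
        case c1 then show ?thesis using sq0 by linarith
      next
        case c2 then show ?thesis using assms(1) by linarith
      qed
    qed
    have I0: "I \<noteq> {}" using y by auto
    have "ereal \<bar>t - s\<bar> \<le> ivl_len J" using ivl_len_ge[OF t s] .
    then have "ereal (sqrt \<bar>t - s\<bar>) \<le> esqrt (ivl_len J)" by (rule esqrt_mono_ereal) simp
    then have e1: "ereal (2 * M\<^sup>2) * ereal (sqrt \<bar>t - s\<bar>) \<le> ereal (2 * M\<^sup>2) * esqrt (ivl_len J)"
      by (rule ereal_mult_left_mono) simp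
    have e2: "ereal (2 * M\<^sup>2) * ereal (sqrt \<bar>t - s\<bar>) = ereal (2 * M\<^sup>2 * sqrt \<bar>t - s\<bar>)" by simp
    have "ereal (2 * M\<^sup>2 * sqrt \<bar>t - s\<bar>) + ereal (4 * M * \<epsilon>) \<le>
        ereal (2 * M\<^sup>2) * esqrt (ivl_len J) + ereal (4 * M * \<epsilon>)"
      using e1 unfolding e2 by (rule add_right_mono)
    then have "ereal (2 * M\<^sup>2 * sqrt \<bar>t - s\<bar> + 4 * M * \<epsilon>) \<le>
        ereal (2 * M\<^sup>2) * esqrt (ivl_len J) + ereal (4 * M * \<epsilon>)" by simp
    then have "ivl_len I > ereal (2 * M\<^sup>2 * sqrt \<bar>t - s\<bar> + 4 * M * \<epsilon>)"
      using assms(5) by (rule le_less_trans)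
    then obtain a b where ab: "a \<in> I" "b \<in> I" "b - a > 2 * M\<^sup>2 * sqrt \<bar>t - s\<bar> + 4 * M * \<epsilon>"
      using ivl_len_gt[OF I0] by blast
    have "0 \<le> 2 * M\<^sup>2 * sqrt \<bar>t - s\<bar> + 4 * M * \<epsilon>" using M0 assms(1) by simp
    then have ab_le: "a \<le> b" using ab(3) by linarith
    have sub: "{a..b} \<subseteq> I"
    proof
      fix x assume "x \<in> {a..b}"
      then have "a \<le> x" "x \<le> b" by auto
      then show "x \<in> I" using assms(3) ab(1,2) unfolding is_interval_1 by blast
    qed
    have bigdist: "\<bar>b - a\<bar> / M - \<epsilon> \<ge> 2 * K"
    proof -
      have "(2 * M\<^sup>2 * sqrt \<bar>t - s\<bar> + 4 * M * \<epsilon>) / M = 2 * K + 2 * \<epsilon>"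
        using M0 unfolding K_def by (simp add: field_simps power2_eq_square)
      moreover have "(2 * M\<^sup>2 * sqrt \<bar>t - s\<bar> + 4 * M * \<epsilon>) / M \<le> \<bar>b - a\<bar> / M"
        using ab(3) M0 by (intro divide_right_mono) auto
      ultimately show ?thesis using assms(1) by linarith
    qed
    have gsf: "gs = (\<lambda>u. fst (F (u, s)))" by (simp add: fun_eq_iff gs_def)
    have gtf: "gt = (\<lambda>u. fst (F (u, t)))" by (simp add: fun_eq_iff gt_def)
    have Bs: "\<bar>gs b - gs a\<bar> \<ge> 2 * K" using along[OF ab(2,1) s gsf] bigdist by linarith
    have lips: "\<forall>u\<in>{a..b}. \<forall>v\<in>{a..b}. \<bar>gs u - gs v\<bar> \<le> M*\<bar>u-v\<bar> + \<epsilon>"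
    proof (intro ballI)
      fix u v assume "u \<in> {a..b}" "v \<in> {a..b}"
      then have "u \<in> I" "v \<in> I" using sub by auto
      then show "\<bar>gs u - gs v\<bar> \<le> M*\<bar>u-v\<bar> + \<epsilon>" using along[OF _ _ s gsf] by blast
    qed
    have lipt: "\<forall>u\<in>{a..b}. \<forall>v\<in>{a..b}. \<bar>gt u - gt v\<bar> \<le> M*\<bar>u-v\<bar> + \<epsilon>"
    proof (intro ballI)
      fix u v assume "u \<in> {a..b}" "v \<in> {a..b}"
      then have "u \<in> I" "v \<in> I" using sub by auto
      then show "\<bar>gt u - gt v\<bar> \<le> M*\<bar>u-v\<bar> + \<epsilon>" using along[OF _ _ t gtf] by blast
    qed
    have "sqrt \<bar>t - s\<bar> / M - 2 * \<epsilon> \<le> sqrt \<bar>ft - fs\<bar>"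
    proof -
      have c1: "\<bar>gs a - gt a\<bar> \<le> K" "\<bar>gs b - gt b\<bar> \<le> K" using cross[OF ab(1)] cross[OF ab(2)] by auto
      from overlap[OF c1 Bs]
      show ?thesis
      proof
        assume "min (gs a) (gs b) \<le> gt a \<and> gt a \<le> max (gs a) (gs b)"
        then obtain v where "v \<in> {a..b}" "\<bar>gs v - gt a\<bar> \<le> \<epsilon>"
          using civt[OF ab_le lips M0 assms(1), of "gt a"] by blast
        then show ?thesis using key[OF ab(1), of v] sub by (auto simp: abs_minus_commute)
      next
        assume "min (gt a) (gt b) \<le> gs a \<and> gs a \<le> max (gt a) (gt b)"
        then obtain u where "u \<in> {a..b}" "\<bar>gt u - gs a\<bar> \<le> \<epsilon>"
          using civt[OF ab_le lipt M0 assms(1), of "gs a"] by blast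
        then show ?thesis using key[OF _ ab(1), of u] sub by auto
      qed
    qed
    then show "d_sqrt t s / M - 2 * \<epsilon> \<le> d_sqrt (snd (F (y, t))) (snd (F (y, s)))"
      unfolding d_sqrt_def ft_def fs_def .
  qed
qed

end
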